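(* Let $n\ge2$, $L>1$, let $\sigma_{1,1}$ be as below, and define $f_{1,1}:[1,\infty)\to\mathbb{R}$ by $f_{1,1}(r)=r+\frac{1+\sigma_{1,1}}{n-1-\sigma_{1,1}}\,r^{-(n-1)}$. Define $F,G:[1,\infty)\to\mathbb{R}$ by $$F(r)=(f_{1,1}'(r))^2+\frac{n-1}{r^2}f_{1,1}(r)^2,\qquad G(r)=2f_{1,1}(r)f_{1,1}'(r)+\frac{n-1}{r}f_{1,1}(r)^2.$$ Then $F$ is a decreasing function of $r$ and $G$ is an increasing function of $r$ on $[1,\infty)$.
   Context: $\sigma_{1,1}$ is the smaller root of $\tilde A\sigma^2+\tilde B\sigma+\tilde C=0$ with $\tilde A=L(L^n-1)$, $\tilde B=-\{L^n+(n-1)L^{n+1}+L+n-1\}$, $\tilde C=(n-1)(L^n-1)$; it is the first nonzero Steklov eigenvalue of the annulus $\{x\in\mathbb{R}^n:1<|x|<L\}$. *)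

theory Defs
  imports "HOL-Analysis.Analysis"
begin

definition tA :: "nat \<Rightarrow> real \<Rightarrow> real" where
  "tA n L = L * (L ^ n - 1)"
definition tB :: "nat \<Rightarrow> real \<Rightarrow> real" where
  "tB n L = - (L ^ n + (real n - 1) * L ^ (n + 1) + L + (real n - 1))"
definition tC :: "nat \<Rightarrow> real \<Rightarrow> real" where
  "tC n L = (real n - 1) * (L ^ n - 1)"

definition sigma11 :: "nat \<Rightarrow> real \<Rightarrow> real" where
  "sigma11 n L = Min {s. tA n L * s ^ 2 + tB n L * s + tC n L = 0}"

definition f11 :: "nat \<Rightarrow> real \<Rightarrow> real \<Rightarrow> real" where
  "f11 n L r = r + (1 + sigma11 n L) / (real n - 1 - sigma11 n L) * inverse (r ^ (n - 1))"

definition F11 :: "nat \<Rightarrow> real \<Rightarrow> real \<Rightarrow> real" where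
  "F11 n L r = (deriv (f11 n L) r) ^ 2 + (real n - 1) / r ^ 2 * (f11 n L r) ^ 2"

definition G11 :: "nat \<Rightarrow> real \<Rightarrow> real \<Rightarrow> real" where
  "G11 n L r = 2 * f11 n L r * deriv (f11 n L) r + (real n - 1) / r * (f11 n L r) ^ 2"

end

theory Submission
  imports Defs "HOL-Library.Quadratic_Discriminant"
begin

lemma h1: fixes r a :: real assumes "r \<noteq> 0"
  shows "inverse (r ^ Suc j) * (a * r ^ j) * inverse (r ^ Suc j) = a / r ^ Suc (Suc j)"
  using assms by (simp add: field_simps)
lemma h2: fixes r a :: real assumes "r \<noteq> 0"
  shows "inverse (r ^ k) * (real k * r ^ (k - Suc 0)) * inverse (r ^ k) = real k / r ^ Suc k"
proof (cases k)
  case 0 then show ?thesis by simp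
next
  case (Suc j) then show ?thesis using h1[OF assms, of j "real k"] by (simp del: power_Suc of_nat_Suc)
qed
lemma d2: fixes k::nat and c r::real assumes "r>0"
  shows "((\<lambda>r. (real k+2)*r + 2*c * inverse (r^k) - real k * c^2 * inverse (r^(2*k+1))) has_real_derivative
     ((real k+2) - 2*real k*c/r^(k+1) + real k*(2*real k+1)*c^2/r^(2*k+2))) (at r)"
  using assms
  apply (intro derivative_eq_intros refl)
  apply (auto simp del: power_Suc)
  apply (subst h1, simp, subst h2, simp)
  apply (simp add: algebra_simps)
  done
lemma d1: fixes k::nat and c r::real assumes "r>0"
  shows "((\<lambda>r. r + c * inverse (r^k)) has_real_derivative (1 - real k * c / r^(k+1))) (at r)"
  using assms
  apply (intro derivative_eq_intros refl)
  apply (auto simp del: power_Suc)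
  apply (subst h2, simp)
  apply simp
  done

lemma pos: fixes k x :: real assumes "k \<ge> 1" shows "(k+2) - 2*k*x + k*(2*k+1)*x^2 > 0"
proof -
  have "(2*k+1)*((k+2) - 2*k*x + k*(2*k+1)*x^2) = k*((2*k+1)*x-1)^2 + ((2*k+1)*(k+2) - k)"
    by (simp add: algebra_simps power2_eq_square)
  moreover have "k*((2*k+1)*x-1)^2 \<ge> 0" using assms by simp
  moreover have "(2*k+1)*(k+2) - k = 2*k*k + 4*k + 2" by (simp add: algebra_simps)
  then have "(2*k+1)*(k+2) - k > 0" using assms by (smt (verit) mult_nonneg_nonneg)
  ultimately have "(2*k+1)*((k+2) - 2*k*x + k*(2*k+1)*x^2) > 0" by linarith
  thus ?thesis using assms by (simp add: zero_less_mult_iff)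
qed

lemma sigma_range:
  assumes n: "n \<ge> 2" and L: "L > (1::real)"
  shows "0 < sigma11 n L \<and> sigma11 n L < 1"
proof -
  define p where "p = (\<lambda>s. tA n L * s ^ 2 + tB n L * s + tC n L)"
  define S where "S = {s. tA n L * s ^ 2 + tB n L * s + tC n L = 0}"
  have Ln: "L ^ n > 1" using L n by (simp add: one_less_power)
  have m: "real n - 1 \<ge> 1" using n by simp
  have A: "tA n L > 0" using Ln L unfolding tA_def by simp
  have C: "tC n L > 0" using Ln m unfolding tC_def by simp
  have B: "tB n L < 0" using Ln m L unfolding tB_def
    by (smt (verit) mult_nonneg_nonneg power_Suc zero_less_power)
  have p0: "p 0 > 0" using C by (simp add: p_def)
  have prod: "(real n - 1 - 1) * (L ^ n * (L - 1)) \<ge> 0" using m Ln L by simp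
  have p1: "p 1 < 0"
    using prod L unfolding p_def tA_def tB_def tC_def by (simp add: algebra_simps)
  have cont: "continuous_on {0..1} p" unfolding p_def by (intro continuous_intros)
  obtain x where x: "0 \<le> x" "x \<le> 1" "p x = 0"
    using IVT2'[of p 1 0 0] p0 p1 cont by force
  have xS: "x \<in> S" using x by (simp add: p_def S_def)
  have x1: "x < 1" using x p1 by (cases "x = 1") auto
  have fin: "finite S"
  proof -
    have "S \<subseteq> {(-tB n L + sqrt (discrim (tA n L) (tB n L) (tC n L))) / (2 * tA n L),
                   (-tB n L - sqrt (discrim (tA n L) (tB n L) (tC n L))) / (2 * tA n L)}"
      using discriminant_iff[of "tA n L"] A unfolding S_def by auto
    thus ?thesis by (rule finite_subset) simp
  qed
  have ne: "S \<noteq> {}" using xS by auto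
  have sS: "sigma11 n L \<in> S" unfolding sigma11_def S_def[symmetric] using fin ne by (rule Min_in)
  have sle: "sigma11 n L \<le> x" unfolding sigma11_def S_def[symmetric] using fin xS by (rule Min_le)
  have spos: "sigma11 n L > 0"
  proof (rule ccontr)
    assume "\<not> sigma11 n L > 0"
    then have "sigma11 n L \<le> 0" by simp
    then have "tB n L * sigma11 n L \<ge> 0" using B by (simp add: mult_nonpos_nonpos)
    moreover have "tA n L * (sigma11 n L)^2 \<ge> 0" using A by simp
    ultimately show False using sS C unfolding S_def by simp
  qed
  show ?thesis using spos sle x1 by simp
qed

lemma aF: fixes r q c k :: real assumes "r>0" "q>0"
  shows "(1 - k*c/(r*q))^2 + k/r^2*(r + c*inverse q)^2 = (k+1) + k*(k+1)*c^2/(r*q)^2"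
  using assms by (simp add: field_simps power2_eq_square)
lemma aG: fixes r q c k :: real assumes "r>0" "q>0"
  shows "2 * (r + c*inverse q) * (1 - k*c/(r*q)) + k/r*(r + c*inverse q)^2 = (k+2)*r + 2*c*inverse q - k*c^2*inverse(r*q^2)"
  using assms by (simp add: field_simps power2_eq_square)

theorem lemma3p1:
  fixes n :: nat and L :: real
  assumes "n \<ge> 2" and "L > 1"
  shows "(\<forall>r s. 1 \<le> r \<longrightarrow> r < s \<longrightarrow> F11 n L s < F11 n L r) \<and>
         (\<forall>r s. 1 \<le> r \<longrightarrow> r < s \<longrightarrow> G11 n L r < G11 n L s)"
proof -
  define k where "k = n - 1"
  define c where "c = (1 + sigma11 n L) / (real n - 1 - sigma11 n L)"
  have rk: "real k = real n - 1" using assms(1) unfolding k_def by (simp add: of_nat_diff)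
  have k1: "real k \<ge> 1" using rk assms(1) by simp
  have sr: "0 < sigma11 n L" "sigma11 n L < 1" using sigma_range[OF assms] by auto
  have cpos: "c > 0" unfolding c_def using sr assms(1) by (intro divide_pos_pos) auto
  have fdef: "f11 n L = (\<lambda>r. r + c * inverse (r^k))"
    unfolding f11_def c_def k_def by (rule ext) simp
  have dv: "deriv (f11 n L) r = 1 - real k * c / r^(k+1)" if "r > 0" for r
    unfolding fdef using d1[OF that] by (rule DERIV_imp_deriv)
  have e1: "r^(k+1) = r*r^k" "r^(2*k+2) = (r*r^k)^2" "r^(2*k+1) = r*(r^k)^2" for r :: real
    by (simp_all add: power2_eq_square power_add mult_2)
  have Fe: "F11 n L r = (real k + 1) + real k * (real k + 1) * c^2 / r^(2*k+2)" if "r > 0" for r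
  proof -
    have "F11 n L r = (1 - real k * c / r^(k+1))^2 + real k / r^2 * (r + c * inverse (r^k))^2"
      unfolding F11_def dv[OF that] by (simp add: fdef rk)
    also have "\<dots> = (real k + 1) + real k * (real k + 1) * c^2 / r^(2*k+2)"
      unfolding e1 using aF[where r=r and q="r^k" and c=c and k="real k"] that by simp
    finally show ?thesis .
  qed
  define g where "g = (\<lambda>r. (real k+2)*r + 2*c * inverse (r^k) - real k * c^2 * inverse (r^(2*k+1)))"
  have Ge: "G11 n L r = g r" if "r > 0" for r
  proof -
    have "G11 n L r = 2 * (r + c * inverse (r^k)) * (1 - real k * c / r^(k+1)) + real k / r * (r + c * inverse (r^k))^2"
      unfolding G11_def dv[OF that] by (simp add: fdef rk)
    also have "\<dots> = g r"
      unfolding e1 g_def using aG[where r=r and q="r^k" and c=c and k="real k"] that by simp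
    finally show ?thesis .
  qed
  have part1: "F11 n L s < F11 n L r" if "1 \<le> r" "r < s" for r s
  proof -
    have "r^(2*k+2) < s^(2*k+2)" using that by (intro power_strict_mono) auto
    then have "1 / s^(2*k+2) < 1 / r^(2*k+2)" using that by (intro divide_strict_left_mono) auto
    moreover have "real k * (real k + 1) * c^2 > 0" using k1 cpos by simp
    ultimately have "real k * (real k + 1) * c^2 * (1 / s^(2*k+2)) < real k * (real k + 1) * c^2 * (1 / r^(2*k+2))"
      by (rule mult_strict_left_mono)
    then show ?thesis using that by (simp add: Fe)
  qed
  have part2: "G11 n L r < G11 n L s" if "1 \<le> r" "r < s" for r s
  proof -
    have "g r < g s"
    proof (rule DERIV_pos_imp_increasing[OF that(2)])
      fix x assume x: "r \<le> x" "x \<le> s"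
      then have xp: "x > 0" using that by simp
      have eq: "(real k+2) - 2*real k*c/x^(k+1) + real k*(2*real k+1)*c^2/x^(2*k+2)
          = (real k+2) - 2*real k*(c/x^(k+1)) + real k*(2*real k+1)*(c/x^(k+1))^2"
      proof -
        have "2*k+2 = (k+1)*2" by simp
        then have ey: "x^(2*k+2) = (x^(k+1))^2" by (simp only: power_mult)
        show ?thesis unfolding ey by (simp add: power_divide)
      qed
      show "\<exists>y. DERIV g x :> y \<and> y > 0"
        using d2[OF xp, of k c] pos[OF k1, of "c/x^(k+1)"] unfolding g_def eq by blast
    qed
    then show ?thesis using that by (simp add: Ge)
  qed
  show ?thesis using part1 part2 by blast
qed

end
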